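(* Let $\widehat M \in \mathbb{R}^{d\times d}$ be symmetric. Fix a unit vector $w\in\mathbb{R}^d$, a scalar $a \in\mathbb{R}$ and $\alpha>0$, and define $\tilde w := (I + \alpha a\widehat M)w$, $w^+ := \tilde w/\|\tilde w\|_2$, $q := w^\top\widehat M w$ and $q^+ := (w^+)^\top\widehat M w^+$. If $\alpha |a|\,\|\widehat M\|_2 \le 1/2$, then $q^+ - q$ is either zero or has the same sign as $a$.
   Context: In the paper $\widehat M = \frac1N\sum_s y^{(s)}x^{(s)}x^{(s)\top}$ is the empirical moment matrix; $\|\cdot\|_2$ denotes the operator norm. *)

theory Defs
  imports "HOL-Analysis.Analysis"
begin

end

theory Submission
  imports Defs
begin

theorem lemma6:
  fixes M :: "real ^ 'd ^ 'd" and w :: "real ^ 'd" and a \<alpha> :: real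
  assumes symM: "transpose M = M"
    and unit: "norm w = 1"
    and alpha_pos: "\<alpha> > 0"
    and small: "\<alpha> * \<bar>a\<bar> * onorm (\<lambda>x. M *v x) \<le> 1 / 2"
  shows "let wt = (mat 1 + (\<alpha> * a) *\<^sub>R M) *v w;
             wp = wt /\<^sub>R norm wt;
             q = w \<bullet> (M *v w);
             qp = wp \<bullet> (M *v wp)
         in qp - q = 0 \<or> sgn (qp - q) = sgn a"
proof -
  define n where "n = onorm (\<lambda>x. M *v x)"
  define c where "c = \<alpha> * a"
  have bl: "bounded_linear (\<lambda>x. M *v x)" by (rule matrix_vector_mul_bounded_linear)
  have nb: "\<And>x. norm (M *v x) \<le> n * norm x" unfolding n_def by (rule onorm[OF bl])
  have n0: "n \<ge> 0" unfolding n_def by (rule onorm_pos_le[OF bl])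
  have cn: "\<bar>c\<bar> * n \<le> 1/2" using small alpha_pos unfolding c_def n_def by (simp add: abs_mult)
  have sym: "\<And>x y. x \<bullet> (M *v y) = (M *v x) \<bullet> y"
  proof -
    fix x y
    have "x \<bullet> (M *v y) = (x v* M) \<bullet> y" by (rule dot_lmul_matrix[symmetric])
    also have "x v* M = x v* transpose M" using symM by simp
    also have "\<dots> = M *v x" by (rule vector_transpose_matrix)
    finally show "x \<bullet> (M *v y) = (M *v x) \<bullet> y" .
  qed
  have quad: "\<And>x. \<bar>x \<bullet> (M *v x)\<bar> \<le> n * (x \<bullet> x)"
  proof -
    fix x :: "real ^ 'd"
    have "\<bar>x \<bullet> (M *v x)\<bar> \<le> norm x * norm (M *v x)" by (rule Cauchy_Schwarz_ineq2)
    also have "\<dots> \<le> norm x * (n * norm x)" by (rule mult_left_mono[OF nb]) simp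
    also have "\<dots> = n * (x \<bullet> x)" by (simp add: power2_norm_eq_inner[symmetric] power2_eq_square)
    finally show "\<bar>x \<bullet> (M *v x)\<bar> \<le> n * (x \<bullet> x)" .
  qed
  define u where "u = M *v w"
  define q where "q = w \<bullet> u"
  define s where "s = u \<bullet> u"
  define t where "t = u \<bullet> (M *v u)"
  define v where "v = u - q *\<^sub>R w"
  have ww: "w \<bullet> w = 1" using unit by (simp add: power2_norm_eq_inner[symmetric])
  define wt where "wt = (mat 1 + (\<alpha> * a) *\<^sub>R M) *v w"
  have wt: "wt = w + c *\<^sub>R u"
    unfolding wt_def u_def c_def
    by (simp add: matrix_vector_mult_add_rdistrib matrix_vector_mul_lid scaleR_matrix_vector_assoc)
  have wMu: "w \<bullet> (M *v u) = s" using sym[of w u] unfolding s_def u_def by simp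
  have Mwt: "M *v wt = u + c *\<^sub>R (M *v u)"
    unfolding wt u_def by (simp add: matrix_vector_right_distrib matrix_vector_mult_scaleR)
  have num: "wt \<bullet> (M *v wt) = q + 2*c* s + c^2 * t"
    unfolding Mwt wt using wMu
    by (simp add: u_def[symmetric] inner_add_left inner_add_right q_def s_def t_def algebra_simps power2_eq_square inner_commute)
  define r where "r = wt \<bullet> wt"
  have rr: "r = 1 + 2*c*q + c^2 * s"
    unfolding r_def wt using ww
    by (simp add: inner_add_left inner_add_right q_def s_def algebra_simps power2_eq_square inner_commute)
  have vv: "v \<bullet> v = s - q^2" unfolding v_def using ww
    by (simp add: inner_diff_left inner_diff_right q_def s_def algebra_simps power2_eq_square inner_commute)
  have Mv: "M *v v = M *v u - q *\<^sub>R u"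
    unfolding v_def by (simp add: matrix_vector_mult_diff_distrib matrix_vector_mult_scaleR u_def)
  have uw: "u \<bullet> w = q" unfolding q_def by (simp add: inner_commute)
  have uMw: "u \<bullet> (M *v w) = s" unfolding s_def u_def by simp
  have vMv: "v \<bullet> (M *v v) = t - 2*q* s + q^3"
  proof -
    have "v \<bullet> (M *v v) = (u - q *\<^sub>R w) \<bullet> (M *v u - q *\<^sub>R u)" using Mv unfolding v_def by simp
    also have "\<dots> = u \<bullet> (M *v u) - q * (u \<bullet> u) - q * (w \<bullet> (M *v u)) + q * q * (w \<bullet> u)"
      by (simp only: inner_diff_left inner_diff_right inner_scaleR_left inner_scaleR_right) (simp add: algebra_simps)
    also have "\<dots> = t - 2*q* s + q^3" unfolding wMu t_def[symmetric] s_def[symmetric] q_def[symmetric]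
      by (simp add: power3_eq_cube)
    finally show ?thesis .
  qed
  have qb: "\<bar>q\<bar> \<le> n" using quad[of w] ww unfolding q_def u_def by simp
  have Nf: "wt \<bullet> (M *v wt) - q * r = c * (2 * (v \<bullet> v) + c * (q * (v \<bullet> v) + v \<bullet> (M *v v)))"
    unfolding num rr vv vMv by (simp add: algebra_simps power2_eq_square power3_eq_cube)
  have v0: "v \<bullet> v \<ge> 0" by simp
  have b1: "\<bar>c * (q * (v \<bullet> v) + v \<bullet> (M *v v))\<bar> \<le> v \<bullet> v"
  proof -
    have "\<bar>q * (v \<bullet> v) + v \<bullet> (M *v v)\<bar> \<le> \<bar>q\<bar> * (v \<bullet> v) + n * (v \<bullet> v)"
    proof -
      have "\<bar>q * (v \<bullet> v) + v \<bullet> (M *v v)\<bar> \<le> \<bar>q * (v \<bullet> v)\<bar> + \<bar>v \<bullet> (M *v v)\<bar>" by (rule abs_triangle_ineq)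
      also have "\<bar>q * (v \<bullet> v)\<bar> = \<bar>q\<bar> * (v \<bullet> v)" using v0 by (simp add: abs_mult)
      finally show ?thesis using quad[of v] by linarith
    qed
    also have "\<dots> \<le> 2 * n * (v \<bullet> v)" using mult_right_mono[OF qb v0] by simp
    finally have h: "\<bar>q * (v \<bullet> v) + v \<bullet> (M *v v)\<bar> \<le> 2 * n * (v \<bullet> v)" .
    have "\<bar>c * (q * (v \<bullet> v) + v \<bullet> (M *v v))\<bar> \<le> \<bar>c\<bar> * (2 * n * (v \<bullet> v))"
      unfolding abs_mult by (rule mult_left_mono[OF h]) simp
    also have "\<dots> = 2 * (\<bar>c\<bar> * n) * (v \<bullet> v)" by simp
    also have "\<dots> \<le> 2 * (1/2) * (v \<bullet> v)" using cn v0 by (intro mult_right_mono) auto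
    finally show ?thesis by simp
  qed
  define N where "N = wt \<bullet> (M *v wt) - q * r"
  have cN: "c * N \<ge> 0"
  proof -
    have "2 * (v \<bullet> v) + c * (q * (v \<bullet> v) + v \<bullet> (M *v v)) \<ge> 0" using b1 v0 by linarith
    then have "c * c * (2 * (v \<bullet> v) + c * (q * (v \<bullet> v) + v \<bullet> (M *v v))) \<ge> 0" by simp
    then show ?thesis unfolding N_def Nf by (simp add: algebra_simps)
  qed
  have nwt: "norm wt \<ge> 1/2"
  proof -
    have "norm (c *\<^sub>R u) = \<bar>c\<bar> * norm u" by simp
    also have "\<dots> \<le> \<bar>c\<bar> * n" using mult_left_mono[OF nb[of w], of "\<bar>c\<bar>"] unit by (simp add: u_def)
    finally have "norm (c *\<^sub>R u) \<le> 1/2" using cn by linarith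
    moreover have "norm w \<le> norm wt + norm (c *\<^sub>R u)"
      using norm_triangle_ineq4[of wt "c *\<^sub>R u"] unfolding wt by simp
    ultimately show ?thesis using unit by simp
  qed
  have rpos: "r > 0"
  proof -
    have "norm wt > 0" using nwt by linarith
    then show ?thesis unfolding r_def by (simp add: power2_norm_eq_inner[symmetric])
  qed
  define wp where "wp = wt /\<^sub>R norm wt"
  have qp: "wp \<bullet> (M *v wp) = (wt \<bullet> (M *v wt)) / r"
    unfolding wp_def r_def
    by (simp add: matrix_vector_mult_scaleR power2_norm_eq_inner[symmetric] power2_eq_square divide_inverse)
  have diff: "wp \<bullet> (M *v wp) - q = N / r" unfolding qp N_def using rpos by (simp add: field_simps)
  have "N / r = 0 \<or> sgn (N / r) = sgn a"
  proof (cases "N = 0")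
    case True then show ?thesis by simp
  next
    case False
    then have "c \<noteq> 0" unfolding N_def Nf by auto
    then have "sgn N = sgn c" using cN False
      by (auto simp: sgn_if zero_le_mult_iff)
    moreover have "sgn c = sgn a" unfolding c_def using alpha_pos by (simp add: sgn_mult)
    moreover have "sgn (N / r) = sgn N" using rpos by (simp add: sgn_divide)
    ultimately show ?thesis by simp
  qed
  then show ?thesis using diff unfolding Let_def wt_def[symmetric] wp_def[symmetric] q_def u_def by simp
qed

end
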